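(* Let $H$ be a finite simple graph with $n=|V(H)|\ge 1$ vertices, chromatic number $\chi=\chi(H)$, and let $m'=m'(H)$ denote the number of non-edges of $H$. Then $$\left\lceil \frac{n}{\chi} \right\rceil \left( n - \frac{\chi}{2}\left\lceil\frac{n}{\chi}-1\right\rceil\right) \leq \rho(H) \leq n+m'.$$
   Context: All graphs are finite and simple. A coloring of a graph means a proper vertex coloring. An induced subgraph is rainbow if all its vertices receive pairwise different colors. For a graph $H$, $\rho(H)$ is the least number $m$ such that there exists a graph $G$ on $m$ vertices with the property that every proper vertex coloring of $G$ contains a rainbow induced subgraph isomorphic to $H$. A non-edge of $H$ is an unordered pair of distinct non-adjacent vertices of $H$. *)

theory Defs
  imports Complex_Main
begin

definition simple_graph :: "'a set \<Rightarrow> ('a \<Rightarrow> 'a \<Rightarrow> bool) \<Rightarrow> bool" where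
  "simple_graph V E \<longleftrightarrow> finite V \<and> (\<forall>x y. E x y \<longrightarrow> x \<in> V \<and> y \<in> V)
     \<and> (\<forall>x y. E x y \<longrightarrow> E y x) \<and> (\<forall>x. \<not> E x x)"

definition proper_coloring :: "'a set \<Rightarrow> ('a \<Rightarrow> 'a \<Rightarrow> bool) \<Rightarrow> ('a \<Rightarrow> nat) \<Rightarrow> bool" where
  "proper_coloring V E c \<longleftrightarrow> (\<forall>x\<in>V. \<forall>y\<in>V. E x y \<longrightarrow> c x \<noteq> c y)"

definition chromatic_number :: "'a set \<Rightarrow> ('a \<Rightarrow> 'a \<Rightarrow> bool) \<Rightarrow> nat" where
  "chromatic_number V E = (LEAST k. \<exists>c. proper_coloring V E c \<and> c ` V \<subseteq> {..<k})"

definition induced_embedding ::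
  "'a set \<Rightarrow> ('a \<Rightarrow> 'a \<Rightarrow> bool) \<Rightarrow> 'b set \<Rightarrow> ('b \<Rightarrow> 'b \<Rightarrow> bool) \<Rightarrow> ('a \<Rightarrow> 'b) \<Rightarrow> bool" where
  "induced_embedding VH EH VG EG f \<longleftrightarrow> inj_on f VH \<and> f ` VH \<subseteq> VG
     \<and> (\<forall>x\<in>VH. \<forall>y\<in>VH. EH x y \<longleftrightarrow> EG (f x) (f y))"

definition rainbow_forces ::
  "'b set \<Rightarrow> ('b \<Rightarrow> 'b \<Rightarrow> bool) \<Rightarrow> 'a set \<Rightarrow> ('a \<Rightarrow> 'a \<Rightarrow> bool) \<Rightarrow> bool" where
  "rainbow_forces VG EG VH EH \<longleftrightarrow> (\<forall>c. proper_coloring VG EG c \<longrightarrow>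
     (\<exists>f. induced_embedding VH EH VG EG f \<and> inj_on c (f ` VH)))"

text \<open>rho(H): least m such that some graph on m vertices (w.l.o.g. on {0..<m})
  forces a rainbow induced copy of H.\<close>
definition rho :: "'a set \<Rightarrow> ('a \<Rightarrow> 'a \<Rightarrow> bool) \<Rightarrow> nat" where
  "rho VH EH = (LEAST m. \<exists>EG :: nat \<Rightarrow> nat \<Rightarrow> bool.
      simple_graph {..<m} EG \<and> rainbow_forces {..<m} EG VH EH)"

definition non_edges :: "'a set \<Rightarrow> ('a \<Rightarrow> 'a \<Rightarrow> bool) \<Rightarrow> 'a set set" where
  "non_edges V E = {{x, y} | x y. x \<in> V \<and> y \<in> V \<and> x \<noteq> y \<and> \<not> E x y}"

end

theory Submission
  imports Defs
begin

lemma transfer_ex: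
  fixes VG :: "'b set" and EG :: "'b \<Rightarrow> 'b \<Rightarrow> bool"
  assumes sg: "simple_graph VG EG" and rf: "rainbow_forces VG EG V E"
  shows "\<exists>EG'::nat\<Rightarrow>nat\<Rightarrow>bool. simple_graph {..<card VG} EG' \<and> rainbow_forces {..<card VG} EG' V E"
proof -
  define m where "m = card VG"
  have fin: "finite VG" using sg unfolding simple_graph_def by blast
  obtain h where h: "bij_betw h {0..<m} VG" using ex_bij_betw_nat_finite[OF fin] m_def by blast
  define hi where "hi = inv_into {0..<m} h"
  have hi: "bij_betw hi VG {0..<m}" unfolding hi_def using h bij_betw_inv_into by blast
  have hhi: "\<And>x. x \<in> VG \<Longrightarrow> h (hi x) = x" unfolding hi_def using h
    by (meson bij_betw_inv_into_right)
  define EG' where "EG' = (\<lambda>x y. x < m \<and> y < m \<and> EG (h x) (h y))"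
  have "simple_graph {..<m} EG'"
    using sg unfolding simple_graph_def EG'_def by auto
  moreover have "rainbow_forces {..<m} EG' V E"
    unfolding rainbow_forces_def
  proof (intro allI impI)
    fix c assume pc: "proper_coloring {..<m} EG' c"
    define c' where "c' = c \<circ> hi"
    have "proper_coloring VG EG c'"
      unfolding proper_coloring_def
    proof (intro ballI impI)
      fix x y assume xy: "x \<in> VG" "y \<in> VG" "EG x y"
      have "hi x < m" "hi y < m" using hi xy bij_betwE by fastforce+
      moreover have "EG' (hi x) (hi y)" using xy hhi \<open>hi x < m\<close> \<open>hi y < m\<close> EG'_def by auto
      ultimately show "c' x \<noteq> c' y" using pc unfolding proper_coloring_def c'_def by auto
    qed
    then obtain f where f: "induced_embedding V E VG EG f" "inj_on c' (f ` V)"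
      using rf unfolding rainbow_forces_def by blast
    have fV: "f ` V \<subseteq> VG" using f(1) unfolding induced_embedding_def by blast
    have "induced_embedding V E {..<m} EG' (hi \<circ> f)"
      unfolding induced_embedding_def
    proof (intro conjI)
      show "inj_on (hi \<circ> f) V" using f(1) fV hi unfolding induced_embedding_def
        by (meson bij_betw_def comp_inj_on inj_on_subset)
      show "(hi \<circ> f) ` V \<subseteq> {..<m}" using fV hi bij_betwE by fastforce
      show "\<forall>x\<in>V. \<forall>y\<in>V. E x y = EG' ((hi \<circ> f) x) ((hi \<circ> f) y)"
      proof (intro ballI)
        fix x y assume "x \<in> V" "y \<in> V"
        then have "f x \<in> VG" "f y \<in> VG" using fV by auto
        then have "hi (f x) < m" "hi (f y) < m" "h (hi (f x)) = f x" "h (hi (f y)) = f y"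
          using hi hhi bij_betwE by fastforce+
        then show "E x y = EG' ((hi \<circ> f) x) ((hi \<circ> f) y)"
          using f(1) \<open>x \<in> V\<close> \<open>y \<in> V\<close> unfolding induced_embedding_def EG'_def by simp
      qed
    qed
    moreover have "inj_on c ((hi \<circ> f) ` V)"
      using f(2) unfolding c'_def by (metis image_comp inj_on_imageI)
    ultimately show "\<exists>f. induced_embedding V E {..<m} EG' f \<and> inj_on c (f ` V)" by blast
  qed
  ultimately have "\<exists>EG::nat\<Rightarrow>nat\<Rightarrow>bool. simple_graph {..<m} EG \<and> rainbow_forces {..<m} EG V E" by blast
  then show ?thesis unfolding m_def .
qed

lemma lower_step:
  fixes EG :: "nat \<Rightarrow> nat \<Rightarrow> bool" and cH :: "'a \<Rightarrow> nat"
  assumes sg: "simple_graph {..<N} EG" and rf: "rainbow_forces {..<N} EG V E"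
    and fV: "finite V" and cH: "proper_coloring V E cH" "cH ` V \<subseteq> {..<k}"
  shows "\<exists>D d. D \<subseteq> {..<N} \<and> proper_coloring D EG d \<and> d ` D \<subseteq> {..<i*k}
           \<and> (\<Sum>j<i. card V - j*k) \<le> card D"
proof (induction i)
  case 0
  show ?case by (rule exI[of _ "{}"]) (auto simp: proper_coloring_def)
next
  case (Suc i)
  then obtain D d where D: "D \<subseteq> {..<N}" "proper_coloring D EG d" "d ` D \<subseteq> {..<i*k}"
     "(\<Sum>j<i. card V - j*k) \<le> card D" by blast
  define c where "c = (\<lambda>x. if x \<in> D then d x else i*k + x)"
  have irr: "\<And>x. \<not> EG x x" using sg unfolding simple_graph_def by blast
  have "proper_coloring {..<N} EG c"
    unfolding proper_coloring_def
  proof (intro ballI impI)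
    fix x y assume xy: "x \<in> {..<N}" "y \<in> {..<N}" "EG x y"
    have "x \<noteq> y" using xy irr by auto
    show "c x \<noteq> c y"
    proof (cases "x \<in> D")
      case True
      then have "d x < i*k" using D(3) by auto
      show ?thesis
      proof (cases "y \<in> D")
        case True
        then show ?thesis using \<open>x \<in> D\<close> D(2) xy unfolding proper_coloring_def c_def by auto
      next
        case False
        then show ?thesis using \<open>x \<in> D\<close> \<open>d x < i*k\<close> unfolding c_def by auto
      qed
    next
      case False
      show ?thesis
      proof (cases "y \<in> D")
        case True
        then have "d y < i*k" using D(3) by auto
        then show ?thesis using \<open>y \<in> D\<close> False unfolding c_def by auto
      next
        case F2: False
        then show ?thesis using False \<open>x \<noteq> y\<close> unfolding c_def by auto
      qed
    qed
  qed
  then obtain f where f: "induced_embedding V E {..<N} EG f" "inj_on c (f ` V)"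
    using rf unfolding rainbow_forces_def by blast
  have finj: "inj_on f V" and fsub: "f ` V \<subseteq> {..<N}"
    and fE: "\<And>x y. x \<in> V \<Longrightarrow> y \<in> V \<Longrightarrow> E x y = EG (f x) (f y)"
    using f(1) unfolding induced_embedding_def by auto
  define W where "W = f ` V - D"
  have cardfV: "card (f ` V) = card V" using finj card_image by blast
  have "card (f ` V \<inter> D) \<le> i*k"
  proof -
    have "inj_on c (f ` V \<inter> D)" using f(2) inj_on_subset by blast
    moreover have "c ` (f ` V \<inter> D) \<subseteq> {..<i*k}" using D(3) unfolding c_def by auto
    ultimately show ?thesis using card_inj_on_le[of c "f ` V \<inter> D" "{..<i*k}"] by simp
  qed
  moreover have "card (f ` V) = card W + card (f ` V \<inter> D)"
  proof -
    have "f ` V = W \<union> (f ` V \<inter> D)" unfolding W_def by blast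
    then have "card (f ` V) = card (W \<union> (f ` V \<inter> D))" by simp
    also have "\<dots> = card W + card (f ` V \<inter> D)"
      by (rule card_Un_disjoint) (auto simp: W_def fV)
    finally show ?thesis .
  qed
  ultimately have cW: "card V - i*k \<le> card W" using cardfV by linarith
  define D' where "D' = D \<union> W"
  define d' where "d' = (\<lambda>x. if x \<in> D then d x else i*k + cH (inv_into V f x))"
  have finD: "finite D" using D(1) finite_subset by blast
  have "D' \<subseteq> {..<N}" using D(1) fsub unfolding D'_def W_def by auto
  moreover have "d' ` D' \<subseteq> {..<Suc i * k}"
  proof
    fix z assume "z \<in> d' ` D'"
    then obtain x where x: "x \<in> D'" "z = d' x" by blast
    show "z \<in> {..<Suc i * k}"
    proof (cases "x \<in> D")
      case True
      then show ?thesis using x D(3) unfolding d'_def by auto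
    next
      case False
      then obtain a where a: "a \<in> V" "x = f a" using x(1) unfolding D'_def W_def by auto
      then have "inv_into V f x = a" using finj by simp
      then show ?thesis using False x cH(2) a unfolding d'_def by auto
    qed
  qed
  moreover have "proper_coloring D' EG d'"
    unfolding proper_coloring_def
  proof (intro ballI impI)
    fix x y assume xy: "x \<in> D'" "y \<in> D'" "EG x y"
    show "d' x \<noteq> d' y"
    proof (cases "x \<in> D")
      case True
      then have "d x < i*k" using D(3) by auto
      show ?thesis
      proof (cases "y \<in> D")
        case True
        then show ?thesis using \<open>x \<in> D\<close> D(2) xy unfolding proper_coloring_def d'_def by auto
      next
        case False
        then show ?thesis using \<open>x \<in> D\<close> \<open>d x < i*k\<close> unfolding d'_def by auto
      qed
    next
      case False
      then obtain a where a: "a \<in> V" "x = f a" using xy(1) unfolding D'_def W_def by auto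
      show ?thesis
      proof (cases "y \<in> D")
        case True
        then have "d y < i*k" using D(3) by auto
        then show ?thesis using \<open>y \<in> D\<close> False unfolding d'_def by auto
      next
        case F2: False
        then obtain b where b: "b \<in> V" "y = f b" using xy(2) unfolding D'_def W_def by auto
        have "E a b" using fE a b xy(3) by simp
        then have "cH a \<noteq> cH b" using cH(1) a b unfolding proper_coloring_def by blast
        moreover have "inv_into V f x = a" "inv_into V f y = b" using finj a b by simp_all
        ultimately show ?thesis using False F2 unfolding d'_def by auto
      qed
    qed
  qed
  moreover have "(\<Sum>j<Suc i. card V - j*k) \<le> card D'"
  proof -
    have "finite W" unfolding W_def using fV by blast
    moreover have "D \<inter> W = {}" unfolding W_def by blast
    ultimately have "card D' = card D + card W" unfolding D'_def using finD card_Un_disjoint by blast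
    then show ?thesis using D(4) cW by simp
  qed
  ultimately show ?case by blast
qed

lemma upper_construction:
  fixes V :: "'a set" and E :: "'a \<Rightarrow> 'a \<Rightarrow> bool"
  assumes sg: "simple_graph V E"
  shows "\<exists>VG :: ('a \<times> nat) set. \<exists>EG. simple_graph VG EG \<and> rainbow_forces VG EG V E
           \<and> card VG \<le> card V + card (non_edges V E)"
proof -
  have fV: "finite V" and Esym: "\<And>x y. E x y \<Longrightarrow> E y x" and Eirr: "\<And>x. \<not> E x x"
    using sg unfolding simple_graph_def by blast+
  obtain g where g: "bij_betw g V {0..<card V}" using ex_bij_betw_finite_nat[OF fV] by blast
  have ginj: "inj_on g V" using g bij_betw_def by blast
  have glt: "\<And>u. u \<in> V \<Longrightarrow> g u < card V" using g bij_betwE by fastforce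
  define K where "K = (\<lambda>u. {v\<in>V. g v < g u \<and> \<not> E u v})"
  define k where "k = (\<lambda>u. card (K u))"
  define VG where "VG = Sigma V (\<lambda>u. {..k u})"
  define EG where "EG = (\<lambda>p q. p \<in> VG \<and> q \<in> VG \<and>
        ((fst p = fst q \<and> snd p \<noteq> snd q) \<or> E (fst p) (fst q)))"
  have finVG: "finite VG" unfolding VG_def using fV by blast
  have sgG: "simple_graph VG EG"
    unfolding simple_graph_def EG_def using finVG Esym Eirr by auto
  have rf: "rainbow_forces VG EG V E"
    unfolding rainbow_forces_def
  proof (intro allI impI)
    fix c assume pc: "proper_coloring VG EG c"
    have greedy: "\<exists>t. (\<forall>u\<in>V. g u < N \<longrightarrow> t u \<le> k u) \<and>
        (\<forall>u\<in>V. \<forall>v\<in>V. g u < N \<longrightarrow> g v < N \<longrightarrow> u \<noteq> v \<longrightarrow> c (u, t u) \<noteq> c (v, t v))" for N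
    proof (induction N)
      case 0
      show ?case by auto
    next
      case (Suc N)
      then obtain t where t1: "\<forall>u\<in>V. g u < N \<longrightarrow> t u \<le> k u"
        and t2: "\<forall>u\<in>V. \<forall>v\<in>V. g u < N \<longrightarrow> g v < N \<longrightarrow> u \<noteq> v \<longrightarrow> c (u, t u) \<noteq> c (v, t v)"
        by blast
      show ?case
      proof (cases "\<exists>u0\<in>V. g u0 = N")
        case False
        then have "\<And>u. u \<in> V \<Longrightarrow> g u < Suc N \<Longrightarrow> g u < N" by (metis less_Suc_eq)
        then show ?thesis using t1 t2 by metis
      next
        case True
        then obtain u0 where u0: "u0 \<in> V" "g u0 = N" by blast
        define B where "B = (\<lambda>v. c (v, t v)) ` K u0"
        define A where "A = (\<lambda>s. c (u0, s)) ` {..k u0}"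
        have "card B \<le> k u0" unfolding B_def k_def by (rule card_image_le) (auto simp: K_def fV)
        moreover have "card A = Suc (k u0)"
        proof -
          have "inj_on (\<lambda>s. c (u0, s)) {..k u0}"
          proof (rule inj_onI)
            fix s s' assume "s \<in> {..k u0}" "s' \<in> {..k u0}" "c (u0, s) = c (u0, s')"
            moreover have "s \<noteq> s' \<Longrightarrow> EG (u0, s) (u0, s')"
              using \<open>s \<in> {..k u0}\<close> \<open>s' \<in> {..k u0}\<close> u0 unfolding EG_def VG_def by auto
            ultimately show "s = s'" using pc u0 unfolding proper_coloring_def VG_def by force
          qed
          then show ?thesis unfolding A_def by (simp add: card_image)
        qed
        moreover have "finite B" unfolding B_def K_def using fV by auto
        ultimately have "\<not> A \<subseteq> B"
          using card_mono[of B A] by linarith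
        then obtain s where s: "s \<le> k u0" "c (u0, s) \<notin> B" unfolding A_def by auto
        define t' where "t' = t(u0 := s)"
        have gne: "\<And>u. u \<in> V \<Longrightarrow> u \<noteq> u0 \<Longrightarrow> g u \<noteq> N"
          using ginj u0 by (metis inj_on_eq_iff)
        have key: "c (u0, s) \<noteq> c (v, t v)" if v: "v \<in> V" "g v < N" for v
        proof (cases "E u0 v")
          case True
          have "t v \<le> k v" using t1 v by blast
          then have "EG (u0, s) (v, t v)" using True s u0 v unfolding EG_def VG_def by auto
          then show ?thesis using pc s u0 v \<open>t v \<le> k v\<close> unfolding proper_coloring_def EG_def by blast
        next
          case False
          then have "v \<in> K u0" unfolding K_def using v u0 by auto
          then show ?thesis using s unfolding B_def by auto
        qed
        have "\<forall>u\<in>V. g u < Suc N \<longrightarrow> t' u \<le> k u"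
          using t1 s gne unfolding t'_def by (metis fun_upd_apply less_Suc_eq)
        moreover have "\<forall>u\<in>V. \<forall>v\<in>V. g u < Suc N \<longrightarrow> g v < Suc N \<longrightarrow> u \<noteq> v \<longrightarrow> c (u, t' u) \<noteq> c (v, t' v)"
        proof (intro ballI impI)
          fix u v assume uv: "u \<in> V" "v \<in> V" "g u < Suc N" "g v < Suc N" "u \<noteq> v"
          show "c (u, t' u) \<noteq> c (v, t' v)"
          proof (cases "u = u0")
            case True
            then have "g v < N" using uv gne less_Suc_eq by metis
            then show ?thesis using key uv True unfolding t'_def by auto
          next
            case False
            then have gu: "g u < N" using uv gne less_Suc_eq by metis
            show ?thesis
            proof (cases "v = u0")
              case True
              then show ?thesis using key[of u] uv gu False unfolding t'_def by auto
            next
              case F2: False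
              then have "g v < N" using uv gne less_Suc_eq by metis
              then show ?thesis using t2 uv gu False F2 unfolding t'_def by auto
            qed
          qed
        qed
        ultimately show ?thesis by blast
      qed
    qed
    obtain t where t1: "\<forall>u\<in>V. g u < card V \<longrightarrow> t u \<le> k u"
        and t2: "\<forall>u\<in>V. \<forall>v\<in>V. g u < card V \<longrightarrow> g v < card V \<longrightarrow> u \<noteq> v \<longrightarrow> c (u, t u) \<noteq> c (v, t v)"
      using greedy[of "card V"] by blast
    define f where "f = (\<lambda>u. (u, t u))"
    have "induced_embedding V E VG EG f"
      unfolding induced_embedding_def
    proof (intro conjI)
      show "inj_on f V" unfolding f_def by (simp add: inj_on_def)
      show "f ` V \<subseteq> VG" unfolding f_def VG_def using t1 glt by auto
      then show "\<forall>x\<in>V. \<forall>y\<in>V. E x y = EG (f x) (f y)"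
        unfolding EG_def f_def using Eirr by auto
    qed
    moreover have "inj_on c (f ` V)"
      unfolding f_def inj_on_def using t2 glt by auto
    ultimately show "\<exists>f. induced_embedding V E VG EG f \<and> inj_on c (f ` V)" by blast
  qed
  have "card VG = (\<Sum>u\<in>V. Suc (k u))" unfolding VG_def using fV by simp
  also have "\<dots> = (\<Sum>u\<in>V. k u) + (\<Sum>u\<in>V. 1)"
    by (simp only: sum.distrib[symmetric] Suc_eq_plus1)
  also have "\<dots> = card V + (\<Sum>u\<in>V. k u)" by simp
  also have "(\<Sum>u\<in>V. k u) = card (Sigma V K)" unfolding k_def
    using fV by (simp add: K_def)
  also have "card (Sigma V K) \<le> card (non_edges V E)"
  proof (rule card_inj_on_le)
    show "inj_on (\<lambda>(u, v). {u, v}) (Sigma V K)"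
    proof (rule inj_onI)
      fix p q assume pq: "p \<in> Sigma V K" "q \<in> Sigma V K" "(\<lambda>(u, v). {u, v}) p = (\<lambda>(u, v). {u, v}) q"
      obtain u v u' v' where p: "p = (u, v)" and q: "q = (u', v')" by fastforce
      have "g v < g u" "g v' < g u'" using pq p q unfolding K_def by auto
      moreover have "{u, v} = {u', v'}" using pq p q by simp
      ultimately show "p = q" unfolding p q by (metis doubleton_eq_iff not_less_iff_gr_or_eq order_less_asym)
    qed
    show "(\<lambda>(u, v). {u, v}) ` Sigma V K \<subseteq> non_edges V E"
    proof
      fix z assume "z \<in> (\<lambda>(u, v). {u, v}) ` Sigma V K"
      then obtain u v where "u \<in> V" "v \<in> K u" "z = {u, v}" by auto
      then show "z \<in> non_edges V E" unfolding K_def non_edges_def by auto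
    qed
    show "finite (non_edges V E)"
      by (rule finite_subset[of _ "Pow V"]) (auto simp: non_edges_def fV)
  qed
  finally have "card VG \<le> card V + card (non_edges V E)" by simp
  then show ?thesis using sgG rf by blast
qed


lemma sum_arith: "(\<Sum>j<q. (a::real) - real j * b) = real q * (a - b/2 * (real q - 1))"
proof (induction q)
  case (Suc q)
  have "(\<Sum>j<Suc q. a - real j * b) = (\<Sum>j<q. a - real j * b) + (a - real q * b)" by simp
  also have "\<dots> = real q * (a - b/2 * (real q - 1)) + (a - real q * b)" using Suc.IH by simp
  also have "\<dots> = real (Suc q) * (a - b/2 * (real (Suc q) - 1))" by (simp add: field_simps)
  finally show ?case .
qed simp

theorem theorem1p1:
  fixes V :: "'a set" and E :: "'a \<Rightarrow> 'a \<Rightarrow> bool"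
  assumes "simple_graph V E" and "V \<noteq> {}"
  defines "n \<equiv> card V" and "\<chi> \<equiv> chromatic_number V E" and "m' \<equiv> card (non_edges V E)"
  shows "real_of_int \<lceil>real n / real \<chi>\<rceil> *
           (real n - real \<chi> / 2 * real_of_int \<lceil>real n / real \<chi> - 1\<rceil>) \<le> real (rho V E)
         \<and> rho V E \<le> n + m'"
proof -
  have fV: "finite V" and Eirr: "\<And>x. \<not> E x x"
    using assms(1) unfolding simple_graph_def by blast+
  obtain VG :: "('a \<times> nat) set" and EG where G: "simple_graph VG EG" "rainbow_forces VG EG V E"
    "card VG \<le> card V + card (non_edges V E)"
    using upper_construction[OF assms(1)] by blast
  have exG: "\<exists>EG'::nat\<Rightarrow>nat\<Rightarrow>bool. simple_graph {..<card VG} EG' \<and> rainbow_forces {..<card VG} EG' V E"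
    using transfer_ex[OF G(1) G(2)] .
  have up: "rho V E \<le> n + m'"
  proof -
    have "rho V E \<le> card VG" unfolding rho_def using exG by (rule Least_le)
    then show ?thesis using G(3) unfolding n_def m'_def by linarith
  qed
  define N where "N = rho V E"
  have "\<exists>EG'::nat\<Rightarrow>nat\<Rightarrow>bool. simple_graph {..<N} EG' \<and> rainbow_forces {..<N} EG' V E"
    unfolding N_def rho_def using exG by (rule LeastI)
  then obtain EGN :: "nat\<Rightarrow>nat\<Rightarrow>bool" where GN: "simple_graph {..<N} EGN" "rainbow_forces {..<N} EGN V E"
    by blast
  have P0: "\<exists>c. proper_coloring V E c \<and> c ` V \<subseteq> {..<card V}"
  proof -
    obtain g where g: "bij_betw g V {0..<card V}" using ex_bij_betw_finite_nat[OF fV] by blast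
    have "proper_coloring V E g" unfolding proper_coloring_def using g Eirr
      by (metis bij_betw_def inj_on_eq_iff)
    moreover have "g ` V \<subseteq> {..<card V}" using g bij_betw_imp_surj_on by fastforce
    ultimately show ?thesis by blast
  qed
  have "\<exists>c. proper_coloring V E c \<and> c ` V \<subseteq> {..<\<chi>}"
    unfolding \<chi>_def chromatic_number_def using P0 by (rule LeastI)
  then obtain cH where cH: "proper_coloring V E cH" "cH ` V \<subseteq> {..<\<chi>}" by blast
  have chipos: "\<chi> \<ge> 1"
  proof (rule ccontr)
    assume "\<not> \<chi> \<ge> 1"
    then have "\<chi> = 0" by simp
    then show False using cH(2) assms(2) by auto
  qed
  have npos: "n \<ge> 1" using fV assms(2) unfolding n_def by (simp add: Suc_leI card_gt_0_iff)
  define q where "q = nat \<lceil>real n / real \<chi>\<rceil>"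
  have "0 \<le> real n / real \<chi>" by simp
  then have qpos: "\<lceil>real n / real \<chi>\<rceil> \<ge> 0" by linarith
  then have qr: "real_of_int \<lceil>real n / real \<chi>\<rceil> = real q" unfolding q_def by simp
  have qlt: "real q - 1 < real n / real \<chi>" using ceiling_correct[of "real n / real \<chi>"] qr by simp
  have jle: "j * \<chi> \<le> n" if "j < q" for j
  proof -
    have "real j \<le> real q - 1" using that by linarith
    then have "real j < real n / real \<chi>" using qlt by linarith
    then have "real j * real \<chi> < real n" using chipos by (simp add: pos_less_divide_eq)
    then show ?thesis by (metis of_nat_less_iff of_nat_mult less_imp_le)
  qed
  obtain D d where D: "D \<subseteq> {..<N}" "(\<Sum>j<q. card V - j*\<chi>) \<le> card D"
    using lower_step[OF GN(1) GN(2) fV cH(1) cH(2), of q] by blast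
  have "card D \<le> N" using D(1) by (metis card_lessThan card_mono finite_lessThan)
  then have sN: "(\<Sum>j<q. n - j*\<chi>) \<le> N" using D(2) unfolding n_def by linarith
  have "real (\<Sum>j<q. n - j*\<chi>) = (\<Sum>j<q. real n - real j * real \<chi>)"
    using jle by (simp add: of_nat_diff)
  also have "\<dots> = real q * (real n - real \<chi> / 2 * (real q - 1))" by (rule sum_arith)
  finally have "real q * (real n - real \<chi> / 2 * (real q - 1)) \<le> real N" using sN by linarith
  moreover have "real_of_int \<lceil>real n / real \<chi> - 1\<rceil> = real q - 1" using qr by simp
  ultimately show ?thesis using up qr unfolding N_def by simp
qed

end
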